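(* Let $A$ be a $d$-dimensional polystochastic matrix of order $n$, $1\le k\le d-1$, and let $\Gamma$ be a $k$-dimensional plane of $A$ containing an index $\alpha$ with $0<a_\alpha<1$. Then there exist a $k$-dimensional plane $\Gamma'$ parallel to and diagonally located with respect to $\Gamma$, and an index $\alpha'\in\Gamma'$, with $0<a_{\alpha'}<1$.
   Context: $A=(a_\alpha)_{\alpha\in\{0,\dots,n-1\}^d}$ is polystochastic if nonnegative and every line (set of indices obtained by fixing all coordinates but one) sums to $1$. A $k$-dimensional plane of direction $(i_1,\dots,i_{d-k})$ is obtained by fixing coordinates $i_1,\dots,i_{d-k}$ to values $(\beta_1,\dots,\beta_{d-k})$ and letting the other coordinates vary. Two planes are parallel if they have the same direction, and parallel planes with fixed values $(\beta_j)$, $(\gamma_j)$ are diagonally located if $\beta_j\ne\gamma_j$ for every $j$. *)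

theory Defs
  imports Complex_Main
begin

text \<open>Indices of a d-dimensional matrix of order n: functions on the coordinates
  {0..<d} with values in {0..<n} (extensional: 0 outside the coordinate range).\<close>
definition indices :: "nat \<Rightarrow> nat \<Rightarrow> (nat \<Rightarrow> nat) set" where
  "indices d n = {\<alpha>. (\<forall>i<d. \<alpha> i < n) \<and> (\<forall>i. d \<le> i \<longrightarrow> \<alpha> i = 0)}"

definition polystochastic :: "nat \<Rightarrow> nat \<Rightarrow> ((nat \<Rightarrow> nat) \<Rightarrow> real) \<Rightarrow> bool" where
  "polystochastic d n A \<longleftrightarrow>
     (\<forall>\<alpha>\<in>indices d n. 0 \<le> A \<alpha>) \<and>
     (\<forall>\<alpha>\<in>indices d n. \<forall>i<d. (\<Sum>j<n. A (\<alpha>(i := j))) = 1)"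

definition plane :: "nat \<Rightarrow> nat \<Rightarrow> nat set \<Rightarrow> (nat \<Rightarrow> nat) \<Rightarrow> (nat \<Rightarrow> nat) set" where
  "plane d n I \<beta> = {\<alpha>\<in>indices d n. \<forall>i\<in>I. \<alpha> i = \<beta> i}"

definition is_plane :: "nat \<Rightarrow> nat \<Rightarrow> nat \<Rightarrow> nat set \<Rightarrow> (nat \<Rightarrow> nat) \<Rightarrow> bool" where
  "is_plane d n k I \<beta> \<longleftrightarrow> I \<subseteq> {..<d} \<and> card I = d - k \<and> (\<forall>i\<in>I. \<beta> i < n)"

definition diagonally_located :: "nat set \<Rightarrow> (nat \<Rightarrow> nat) \<Rightarrow> (nat \<Rightarrow> nat) \<Rightarrow> bool" where
  "diagonally_located I \<beta> \<gamma> \<longleftrightarrow> (\<forall>i\<in>I. \<beta> i \<noteq> \<gamma> i)"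

end

theory Submission
  imports Defs
begin

lemma upd_indices:
  assumes "\<alpha> \<in> indices d n" "i < d" "j < n"
  shows "\<alpha>(i := j) \<in> indices d n"
  using assms by (auto simp: indices_def)

lemma step_lemma:
  assumes P: "polystochastic d n A" and a: "\<alpha> \<in> indices d n" and i: "i < d"
    and pos: "0 < A \<alpha>" and lt: "A \<alpha> < 1"
  shows "\<exists>j<n. j \<noteq> \<alpha> i \<and> 0 < A (\<alpha>(i := j)) \<and> A (\<alpha>(i := j)) < 1"
proof -
  have ai: "\<alpha> i < n" using a i by (auto simp: indices_def)
  have s: "(\<Sum>j<n. A (\<alpha>(i := j))) = 1" using P a i by (auto simp: polystochastic_def)
  have nn: "\<And>j. j < n \<Longrightarrow> 0 \<le> A (\<alpha>(i := j))"
    using P upd_indices[OF a i] by (auto simp: polystochastic_def)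
  let ?R = "{..<n} - {\<alpha> i}"
  have "(\<Sum>j<n. A (\<alpha>(i := j))) = A (\<alpha>(i := \<alpha> i)) + (\<Sum>j\<in>?R. A (\<alpha>(i := j)))"
    using ai by (subst sum.remove[of _ "\<alpha> i"]) auto
  hence r: "(\<Sum>j\<in>?R. A (\<alpha>(i := j))) = 1 - A \<alpha>" using s by simp
  have "\<exists>j\<in>?R. 0 < A (\<alpha>(i := j))"
  proof (rule ccontr)
    assume "\<not> ?thesis"
    hence "(\<Sum>j\<in>?R. A (\<alpha>(i := j))) \<le> 0" by (intro sum_nonpos) (auto simp: not_less)
    thus False using r lt by simp
  qed
  then obtain j where j: "j \<in> ?R" "0 < A (\<alpha>(i := j))" by blast
  have "A (\<alpha>(i := j)) \<le> (\<Sum>j\<in>?R. A (\<alpha>(i := j)))"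
    by (rule member_le_sum) (use j nn in auto)
  thus ?thesis using j r pos by auto
qed

lemma multi_step:
  assumes P: "polystochastic d n A" and S: "finite S" "S \<subseteq> {..<d}"
  shows "\<alpha> \<in> indices d n \<Longrightarrow> 0 < A \<alpha> \<Longrightarrow> A \<alpha> < 1 \<Longrightarrow>
    \<exists>\<alpha>'. \<alpha>' \<in> indices d n \<and> 0 < A \<alpha>' \<and> A \<alpha>' < 1 \<and> (\<forall>i\<in>S. \<alpha>' i \<noteq> \<alpha> i)
       \<and> (\<forall>i. i \<notin> S \<longrightarrow> \<alpha>' i = \<alpha> i)"
  using S
proof (induction S rule: finite_induct)
  case empty
  then show ?case by auto
next
  case (insert x F)
  then obtain \<alpha>' where a': "\<alpha>' \<in> indices d n" "0 < A \<alpha>'" "A \<alpha>' < 1"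
    "\<forall>i\<in>F. \<alpha>' i \<noteq> \<alpha> i" "\<forall>i. i \<notin> F \<longrightarrow> \<alpha>' i = \<alpha> i" by auto
  have xd: "x < d" using insert by auto
  obtain j where j: "j < n" "j \<noteq> \<alpha>' x" "0 < A (\<alpha>'(x := j))" "A (\<alpha>'(x := j)) < 1"
    using step_lemma[OF P a'(1) xd a'(2,3)] by blast
  have "\<forall>i\<in>insert x F. (\<alpha>'(x := j)) i \<noteq> \<alpha> i" using j(2) a'(4,5) insert.hyps by auto
  moreover have "\<forall>i. i \<notin> insert x F \<longrightarrow> (\<alpha>'(x := j)) i = \<alpha> i" using a'(5) by auto
  ultimately show ?case using j(3,4) upd_indices[OF a'(1) xd j(1)] by blast
qed

theorem mainTheorem7:
  fixes d n k :: nat and A :: "(nat \<Rightarrow> nat) \<Rightarrow> real"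
    and I :: "nat set" and \<beta> \<alpha> :: "nat \<Rightarrow> nat"
  assumes "polystochastic d n A"
    and "1 \<le> k" and "k \<le> d - 1"
    and "is_plane d n k I \<beta>"
    and "\<alpha> \<in> plane d n I \<beta>" and "0 < A \<alpha>" and "A \<alpha> < 1"
  shows "\<exists>\<gamma> \<alpha>'. is_plane d n k I \<gamma> \<and> diagonally_located I \<beta> \<gamma> \<and>
           \<alpha>' \<in> plane d n I \<gamma> \<and> 0 < A \<alpha>' \<and> A \<alpha>' < 1"
proof -
  have Id: "I \<subseteq> {..<d}" and cI: "card I = d - k" using assms(4) by (auto simp: is_plane_def)
  have fI: "finite I" using Id finite_subset by blast
  have a: "\<alpha> \<in> indices d n" "\<forall>i\<in>I. \<alpha> i = \<beta> i" using assms(5) by (auto simp: plane_def)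
  obtain \<alpha>' where a': "\<alpha>' \<in> indices d n" "0 < A \<alpha>'" "A \<alpha>' < 1" "\<forall>i\<in>I. \<alpha>' i \<noteq> \<alpha> i"
    using multi_step[OF assms(1) fI Id a(1) assms(6,7)] by blast
  have "is_plane d n k I \<alpha>'" using Id cI a'(1) by (auto simp: is_plane_def indices_def)
  moreover have "diagonally_located I \<beta> \<alpha>'" using a(2) a'(4) by (auto simp: diagonally_located_def)
  moreover have "\<alpha>' \<in> plane d n I \<alpha>'" using a'(1) by (auto simp: plane_def)
  ultimately show ?thesis using a' by blast
qed

end
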